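(* Consider the optimization problem (P) defined in the context. Every optimal solution $(\boldsymbol\tau,\boldsymbol\varphi,\mathbf e)$ of (P) satisfies $\sum_{k=0}^{K}\tau_k=T$.
   Context: Parameters: integer $K\ge1$, $T>0$, $W>0$, $\zeta\in(0,1]$, $P_t>0$, $I_p>0$, and for $k=1,\dots,K$: $h_k>0$, $f_k>0$, $\gamma_k>0$, $B_k^b>0$. Variables: $\boldsymbol\tau=(\tau_0,\tau_1,\dots,\tau_K)$, $\boldsymbol\varphi=(\varphi_1,\dots,\varphi_K)$, $\mathbf e=(e_1,\dots,e_K)$. Rate of node $k$: $R_k(\tau_k,\varphi_k,e_k)=\varphi_k W\log_2(1+\frac{e_k}{\varphi_k}\gamma_k)+(\tau_k-\varphi_k)B_k^b$ if $\varphi_k>0$, and $R_k=\tau_kB_k^b$ if $\varphi_k=0$. Problem (P): maximize $R(\boldsymbol\tau,\boldsymbol\varphi,\mathbf e)=\min_{1\le k\le K}R_k(\tau_k,\varphi_k,e_k)$ subject to: $\sum_{k=0}^K\tau_k\le T$; $0\le\tau_0$; $0\le\varphi_k\le\tau_k\le T$ for $k=1,\dots,K$; $0\le e_k\le \zeta P_t h_k\sum_{i=0}^{k-1}\tau_i$ for $k=1,\dots,K$ (harvested-energy constraint); $e_k\le \frac{I_p}{f_k}\varphi_k$ for $k=1,\dots,K$ (interference constraint). *)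

theory Defs
  imports Complex_Main
begin

definition rate :: "real \<Rightarrow> real \<Rightarrow> real \<Rightarrow> real \<Rightarrow> real \<Rightarrow> real \<Rightarrow> real" where
  "rate W \<gamma>k Bk \<tau>k \<phi>k ek =
     (if \<phi>k > 0 then \<phi>k * W * log 2 (1 + ek / \<phi>k * \<gamma>k) + (\<tau>k - \<phi>k) * Bk
      else \<tau>k * Bk)"

definition objective :: "nat \<Rightarrow> real \<Rightarrow> (nat \<Rightarrow> real) \<Rightarrow> (nat \<Rightarrow> real) \<Rightarrow>
    (nat \<Rightarrow> real) \<Rightarrow> (nat \<Rightarrow> real) \<Rightarrow> (nat \<Rightarrow> real) \<Rightarrow> real" where
  "objective K W \<gamma> B \<tau> \<phi> e = Min ((\<lambda>k. rate W (\<gamma> k) (B k) (\<tau> k) (\<phi> k) (e k)) ` {1..K})"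

text \<open>Feasible set of (P). tau is indexed 0..K, phi and e are indexed 1..K.\<close>
definition feasible :: "nat \<Rightarrow> real \<Rightarrow> real \<Rightarrow> real \<Rightarrow> real \<Rightarrow>
    (nat \<Rightarrow> real) \<Rightarrow> (nat \<Rightarrow> real) \<Rightarrow>
    (nat \<Rightarrow> real) \<Rightarrow> (nat \<Rightarrow> real) \<Rightarrow> (nat \<Rightarrow> real) \<Rightarrow> bool" where
  "feasible K T \<zeta> Pt Ip h f \<tau> \<phi> e \<longleftrightarrow>
     (\<Sum>k=0..K. \<tau> k) \<le> T \<and> 0 \<le> \<tau> 0 \<and>
     (\<forall>k\<in>{1..K}. 0 \<le> \<phi> k \<and> \<phi> k \<le> \<tau> k \<and> \<tau> k \<le> T \<and>
        0 \<le> e k \<and> e k \<le> \<zeta> * Pt * h k * (\<Sum>i=0..k-1. \<tau> i) \<and>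
        e k \<le> Ip / f k * \<phi> k)"

definition optimal :: "nat \<Rightarrow> real \<Rightarrow> real \<Rightarrow> real \<Rightarrow> real \<Rightarrow> real \<Rightarrow>
    (nat \<Rightarrow> real) \<Rightarrow> (nat \<Rightarrow> real) \<Rightarrow> (nat \<Rightarrow> real) \<Rightarrow> (nat \<Rightarrow> real) \<Rightarrow>
    (nat \<Rightarrow> real) \<Rightarrow> (nat \<Rightarrow> real) \<Rightarrow> (nat \<Rightarrow> real) \<Rightarrow> bool" where
  "optimal K T W \<zeta> Pt Ip h f \<gamma> B \<tau> \<phi> e \<longleftrightarrow>
     feasible K T \<zeta> Pt Ip h f \<tau> \<phi> e \<and>
     (\<forall>\<tau>' \<phi>' e'. feasible K T \<zeta> Pt Ip h f \<tau>' \<phi>' e' \<longrightarrow>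
        objective K W \<gamma> B \<tau>' \<phi>' e' \<le> objective K W \<gamma> B \<tau> \<phi> e)"

end

theory Submission
  imports Defs
begin

lemma rate_shift:
  "rate W g b (t + d) p x = rate W g b t p x + d * b"
  unfolding rate_def by (simp add: algebra_simps)

theorem proposition1:
  fixes K :: nat and T W \<zeta> Pt Ip :: real
    and h f \<gamma> B \<tau> \<phi> e :: "nat \<Rightarrow> real"
  assumes "K \<ge> 1" and "T > 0" and "W > 0" and "0 < \<zeta>" and "\<zeta> \<le> 1"
    and "Pt > 0" and "Ip > 0"
    and "\<forall>k\<in>{1..K}. h k > 0 \<and> f k > 0 \<and> \<gamma> k > 0 \<and> B k > 0"
    and "optimal K T W \<zeta> Pt Ip h f \<gamma> B \<tau> \<phi> e"
  shows "(\<Sum>k=0..K. \<tau> k) = T"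
proof (rule ccontr)
  assume ne: "(\<Sum>k=0..K. \<tau> k) \<noteq> T"
  have feas: "feasible K T \<zeta> Pt Ip h f \<tau> \<phi> e" and
    opt: "\<And>\<tau>' \<phi>' e'. feasible K T \<zeta> Pt Ip h f \<tau>' \<phi>' e' \<Longrightarrow>
        objective K W \<gamma> B \<tau>' \<phi>' e' \<le> objective K W \<gamma> B \<tau> \<phi> e"
    using assms(9) unfolding optimal_def by auto
  define S where "S = (\<Sum>k=0..K. \<tau> k)"
  have SlT: "S < T" using feas ne unfolding feasible_def S_def by auto
  define d where "d = (T - S) / (real K + 1)"
  have dpos: "d > 0" using SlT by (simp add: d_def)
  have dle: "d \<le> T - S" using SlT assms(1) by (simp add: d_def field_simps)
  have dsum: "(real K + 1) * d = T - S" by (simp add: d_def)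
  define \<tau>' where "\<tau>' = (\<lambda>k. \<tau> k + d)"
  have tnn: "\<forall>k\<in>{0..K}. 0 \<le> \<tau> k"
  proof
    fix k assume "k \<in> {0..K}"
    show "0 \<le> \<tau> k"
    proof (cases "k = 0")
      case True then show ?thesis using feas unfolding feasible_def by simp
    next
      case False
      then have "k \<in> {1..K}" using \<open>k \<in> {0..K}\<close> by auto
      then show ?thesis using feas unfolding feasible_def by force
    qed
  qed
  have tleS: "\<forall>k\<in>{0..K}. \<tau> k \<le> S"
  proof
    fix k assume k: "k \<in> {0..K}"
    show "\<tau> k \<le> S" unfolding S_def
      using member_le_sum[of k "{0..K}" \<tau>] k tnn by auto
  qed
  have sum': "(\<Sum>k=0..K. \<tau>' k) = T"
    unfolding \<tau>'_def sum.distrib using dsum by (simp add: S_def[symmetric] algebra_simps)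
  have feas': "feasible K T \<zeta> Pt Ip h f \<tau>' \<phi> e"
    unfolding feasible_def
  proof (intro conjI ballI)
    show "(\<Sum>k=0..K. \<tau>' k) \<le> T" using sum' by simp
    show "0 \<le> \<tau>' 0" using tnn dpos by (simp add: \<tau>'_def)
  next
    fix k assume k: "k \<in> {1..K}"
    show "0 \<le> \<phi> k" "\<phi> k \<le> \<tau>' k" "0 \<le> e k" "e k \<le> Ip / f k * \<phi> k"
      using feas k dpos unfolding feasible_def \<tau>'_def by fastforce+
    have "\<tau> k \<le> S" using tleS k by auto
    then show "\<tau>' k \<le> T" using dle by (simp add: \<tau>'_def)
    have "(\<Sum>i=0..k-1. \<tau> i) \<le> (\<Sum>i=0..k-1. \<tau>' i)"
      by (rule sum_mono) (simp add: \<tau>'_def dpos less_imp_le)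
    moreover have "0 \<le> \<zeta> * Pt * h k"
    proof -
      have "h k > 0" using assms(8) k by blast
      then show ?thesis using assms(4,6) by simp
    qed
    ultimately have "\<zeta> * Pt * h k * (\<Sum>i=0..k-1. \<tau> i) \<le> \<zeta> * Pt * h k * (\<Sum>i=0..k-1. \<tau>' i)"
      by (rule mult_left_mono)
    moreover have "e k \<le> \<zeta> * Pt * h k * (\<Sum>i=0..k-1. \<tau> i)"
      using feas k unfolding feasible_def by blast
    ultimately show "e k \<le> \<zeta> * Pt * h k * (\<Sum>i=0..k-1. \<tau>' i)" by linarith
  qed
  let ?r = "\<lambda>k. rate W (\<gamma> k) (B k) (\<tau> k) (\<phi> k) (e k)"
  let ?r' = "\<lambda>k. rate W (\<gamma> k) (B k) (\<tau>' k) (\<phi> k) (e k)"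
  have fin: "finite (?r' ` {1..K})" by simp
  have nem: "?r' ` {1..K} \<noteq> {}" using assms(1) by auto
  obtain k where k: "k \<in> {1..K}" and km: "Min (?r' ` {1..K}) = ?r' k"
    using Min_in[OF fin nem] by auto
  have "?r' k = ?r k + d * B k" unfolding \<tau>'_def by (rule rate_shift)
  moreover have "d * B k > 0" using dpos assms(8) k by simp
  moreover have "Min (?r ` {1..K}) \<le> ?r k" using k by simp
  ultimately have "objective K W \<gamma> B \<tau> \<phi> e < objective K W \<gamma> B \<tau>' \<phi> e"
    unfolding objective_def using km by linarith
  with opt[OF feas'] show False by linarith
qed

end
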